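(* Let $\phi_\tau$ and $\psi_\tau$ be the flows of $x'=x-x^2$ and $x'=x^2-x$ respectively (the reduced Milne-state equation $\Omega'=\mu\Omega(\Omega-1)$ for $\mu=-1$ and $\mu=+1$). Then $$\phi_\tau(x)=\frac{xe^\tau}{xe^\tau-x+1},\qquad \psi_\tau(x)=\frac{x}{x-xe^\tau+e^\tau},$$ and for every state $x\in(0,1)$ the function $\tau\mapsto\phi_\tau(x)-\psi_\tau(x)$ is strictly increasing. Consequently the sync function $\omega=|\phi_\tau(x)-\psi_\tau(x)|$ does not tend to $0$ as $\tau\to+\infty$, so a Friedmann domain governed by the reduced equation $\Omega'=-\mu\Omega+\mu\Omega^2$ (with $\mu$ ranging over values on both sides of $0$) is not dynamically synchronized in the future.
   Context: $\Omega$ is the density parameter of a Friedmann universe with perfect fluid, $\mu=3\gamma-2$ the fluid parameter treated as varying, $\tau$ the dimensionless time. For a reduced system $\Omega'=F(\Omega,\mu)$ with flow $\phi_\tau(\Omega,\mu)$, the sync function is $\omega=|\phi_\tau(\Omega_+,\mu_+)-\phi_\tau(\Omega_-,\mu_-)|$ for pairs of states $\Omega_\pm$ and parameter values $\mu_\pm$; the domain is dynamically synchronized in the future if $\omega\to0$ as $\tau\to+\infty$ for all $\mu\in\mathbb{R}$, $\Omega>0$, and it desynchronizes if for some pair of parameter values and/or states this limit fails to exist or is nonzero. *)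

theory Defs
  imports "HOL-Analysis.Analysis"
begin

definition phi_flow :: "real \<Rightarrow> real \<Rightarrow> real" where
  "phi_flow \<tau> x = x * exp \<tau> / (x * exp \<tau> - x + 1)"

definition psi_flow :: "real \<Rightarrow> real \<Rightarrow> real" where
  "psi_flow \<tau> x = x / (x - x * exp \<tau> + exp \<tau>)"

definition sync_omega :: "real \<Rightarrow> real \<Rightarrow> real" where
  "sync_omega \<tau> x = \<bar>phi_flow \<tau> x - psi_flow \<tau> x\<bar>"

end

theory Submission
  imports Defs
begin

lemma antider:
  fixes f :: "real \<Rightarrow> real"
  assumes "\<And>t. isCont f t"
  obtains F where "\<And>t. (F has_real_derivative f t) (at t)"
proof -
  have "\<exists>F. \<forall>x :: real. (-\<infinity>::ereal) < x \<longrightarrow> x < (\<infinity>::ereal) \<longrightarrow> (F has_vector_derivative f x) (at x)"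
    by (rule einterval_antiderivative) (auto simp: assms)
  then obtain F where "\<And>x. (F has_vector_derivative f x) (at x)" by auto
  then show ?thesis using that by (metis has_real_derivative_iff_has_vector_derivative)
qed

lemma den1:
  assumes "x \<in> {0..1::real}" shows "x * exp t - x + 1 > 0"
proof (cases "x = 0")
  case False
  then have "x * exp t > 0" using assms by auto
  then show ?thesis using assms by auto
qed simp

lemma den2:
  assumes "x \<in> {0..1::real}" shows "x + (1 - x) * exp (-t) > 0"
proof (cases "x = 1")
  case False
  then have "(1 - x) * exp (-t) > 0" using assms by auto
  then show ?thesis using assms by auto
qed simp

lemma phi_alt:
  assumes "x \<in> {0..1::real}"
  shows "phi_flow t x = x / (x + (1 - x) * exp (-t))"
proof -
  have "x * exp t - x + 1 > 0" using assms
    by (rule den1)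
  moreover have "x + (1 - x) * exp (-t) > 0" using assms
    by (rule den2)
  ultimately show ?thesis unfolding phi_flow_def
    by (simp add: exp_minus field_simps)
qed

lemma uniq:
  fixes f :: "real \<Rightarrow> real"
  assumes x: "x \<in> {0..1}" and f0: "f 0 = x"
    and fd: "\<And>t. (f has_real_derivative (f t - (f t)^2)) (at t)"
  shows "f t = phi_flow t x"
proof -
  have "\<And>t. isCont f t" using fd by (meson DERIV_isCont)
  then obtain F where F: "\<And>t. (F has_real_derivative f t) (at t)" using antider by blast
  define H where "H t = (f t * (x + (1 - x) * exp (-t)) - x) * exp (F t)" for t
  have "(H has_real_derivative 0) (at s)" for s
  proof -
    have "(H has_real_derivative
      ((f s - (f s)^2) * (x + (1 - x) * exp (-s)) + f s * ((1 - x) * (exp (-s) * (-1)))) * exp (F s)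
       + (f s * (x + (1 - x) * exp (-s)) - x) * (exp (F s) * f s)) (at s)"
      unfolding H_def[abs_def]
      by (rule derivative_eq_intros fd F refl | simp)+
    moreover have "((f s - (f s)^2) * (x + (1 - x) * exp (-s)) + f s * ((1 - x) * (exp (-s) * (-1)))) * exp (F s)
       + (f s * (x + (1 - x) * exp (-s)) - x) * (exp (F s) * f s) = 0"
      by (simp add: algebra_simps power2_eq_square)
    ultimately show ?thesis by simp
  qed
  then have "H t = H 0" by (meson DERIV_isconst_all)
  also have "H 0 = 0" by (simp add: H_def f0)
  finally have "f t * (x + (1 - x) * exp (-t)) = x" by (simp add: H_def)
  moreover have "x + (1 - x) * exp (-t) > 0" using x
    by (rule den2)
  ultimately show ?thesis unfolding phi_alt[OF x, of t] by (simp add: eq_divide_eq)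
qed

lemma psi_phi: "psi_flow t x = phi_flow (-t) x"
proof -
  have "exp t * exp (-t) = 1" by (simp add: exp_minus_inverse)
  then show ?thesis unfolding phi_flow_def psi_flow_def
    by (simp add: exp_minus field_simps)
qed


lemma phi_deriv:
  assumes x: "x \<in> {0..1::real}"
  shows "((\<lambda>t. phi_flow t x) has_real_derivative (phi_flow \<tau> x - (phi_flow \<tau> x)^2)) (at \<tau>)"
proof -
  have D: "x * exp t - x + 1 > 0" for t using x
    by (rule den1)
  have "((\<lambda>t. x * exp t / (x * exp t - x + 1)) has_real_derivative
     ((x * exp \<tau>) * (x * exp \<tau> - x + 1) - (x * exp \<tau>) * (x * exp \<tau>)) / (x * exp \<tau> - x + 1)^2) (at \<tau>)"
    using D[of \<tau>]
    by (auto intro!: derivative_eq_intros simp: power2_eq_square)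
  moreover have "((x * exp \<tau>) * (x * exp \<tau> - x + 1) - (x * exp \<tau>) * (x * exp \<tau>)) / (x * exp \<tau> - x + 1)^2
     = phi_flow \<tau> x - (phi_flow \<tau> x)^2"
  proof -
    have g: "(E * Dn - E * E) / Dn^2 = E / Dn - (E / Dn)^2" if "Dn \<noteq> 0" for E Dn :: real
      using that by (simp add: field_simps power2_eq_square)
    show ?thesis unfolding phi_flow_def by (rule g) (use D[of \<tau>] in simp)
  qed
  ultimately show ?thesis unfolding phi_flow_def[abs_def] by simp
qed

lemma psi_deriv:
  assumes x: "x \<in> {0..1::real}"
  shows "((\<lambda>t. psi_flow t x) has_real_derivative ((psi_flow \<tau> x)^2 - psi_flow \<tau> x)) (at \<tau>)"
proof -
  have "((\<lambda>t. phi_flow (-t) x) has_real_derivative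
      (phi_flow (-\<tau>) x - (phi_flow (-\<tau>) x)^2) * (-1)) (at \<tau>)"
    by (rule DERIV_chain2[OF phi_deriv[OF x]]) (auto intro!: derivative_eq_intros)
  then show ?thesis unfolding psi_phi by (simp add: algebra_simps)
qed

lemma psi_uniq:
  fixes f :: "real \<Rightarrow> real"
  assumes x: "x \<in> {0..1}" and f0: "f 0 = x"
    and fd: "\<And>t. (f has_real_derivative ((f t)^2 - f t)) (at t)"
  shows "f t = psi_flow t x"
proof -
  have "(\<lambda>s. f (-s)) (-t) = phi_flow (-t) x"
  proof (rule uniq[OF x])
    show "f (- 0) = x" using f0 by simp
    fix s
    have "((\<lambda>s. f (-s)) has_real_derivative ((f (-s))^2 - f (-s)) * (-1)) (at s)"
      by (rule DERIV_chain2[OF fd]) (auto intro!: derivative_eq_intros)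
    then show "((\<lambda>s. f (-s)) has_real_derivative (f (-s) - (f (-s))^2)) (at s)"
      by (simp add: algebra_simps)
  qed
  then show ?thesis by (simp add: psi_phi)
qed

lemma diff_mono:
  assumes x: "x \<in> {0<..<1::real}"
  shows "strict_mono (\<lambda>\<tau>. phi_flow \<tau> x - psi_flow \<tau> x)"
proof (rule strict_monoI)
  fix s t :: real assume st: "s < t"
  have x': "x \<in> {0..1}" using x by auto
  have a: "0 < x" "0 < 1 - x" using x by auto
  have e1: "exp (-t) < exp (-s)" "exp s < exp t" using st by auto
  have p: "phi_flow s x < phi_flow t x"
    unfolding phi_alt[OF x']
    apply (rule divide_strict_left_mono)
    using a e1 by (auto intro!: add_pos_pos mult_pos_pos)
  have q: "psi_flow t x < psi_flow s x"
    unfolding psi_phi phi_alt[OF x']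
    apply (rule divide_strict_left_mono)
    using a e1 by (auto intro!: add_pos_pos mult_pos_pos)
  show "phi_flow s x - psi_flow s x < phi_flow t x - psi_flow t x" using p q by simp
qed

lemma no_sync:
  assumes x: "x \<in> {0<..<1::real}"
  shows "\<not> ((\<lambda>\<tau>. sync_omega \<tau> x) \<longlongrightarrow> 0) at_top"
proof
  let ?d = "\<lambda>\<tau>. phi_flow \<tau> x - psi_flow \<tau> x"
  assume "((\<lambda>\<tau>. sync_omega \<tau> x) \<longlongrightarrow> 0) at_top"
  have d0: "?d 0 = 0" by (simp add: phi_flow_def psi_flow_def)
  have m: "strict_mono ?d" by (rule diff_mono[OF x])
  have d1: "?d 1 > 0" using strict_monoD[OF m, of 0 1] d0 by simp
  have "eventually (\<lambda>\<tau>. sync_omega \<tau> x < ?d 1) at_top"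
    using order_tendstoD(2)[OF \<open>((\<lambda>\<tau>. sync_omega \<tau> x) \<longlongrightarrow> 0) at_top\<close> d1] .
  then obtain N where N: "\<And>\<tau>. \<tau> \<ge> N \<Longrightarrow> sync_omega \<tau> x < ?d 1"
    unfolding eventually_at_top_linorder by blast
  define \<tau> where "\<tau> = max N 1"
  have t: "sync_omega \<tau> x < ?d 1" "\<tau> \<ge> 1" using N[of \<tau>] by (auto simp: \<tau>_def)
  have "?d 1 \<le> ?d \<tau>" using strict_mono_less_eq[OF m, of 1 \<tau>] t(2) by simp
  moreover have "?d \<tau> \<le> sync_omega \<tau> x" unfolding sync_omega_def by (rule abs_ge_self)
  ultimately show False using t(1) by linarith
qed

theorem mainTheorem8:
  shows
    "(\<forall>x\<in>{0..1}. phi_flow 0 x = x \<and>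
        (\<forall>\<tau>. ((\<lambda>t. phi_flow t x) has_real_derivative
                 (phi_flow \<tau> x - (phi_flow \<tau> x)^2)) (at \<tau>)) \<and>
        (\<forall>f :: real \<Rightarrow> real. f 0 = x \<and>
           (\<forall>t. (f has_real_derivative (f t - (f t)^2)) (at t))
           \<longrightarrow> (\<forall>t. f t = phi_flow t x)))
   \<and> (\<forall>x\<in>{0..1}. psi_flow 0 x = x \<and>
        (\<forall>\<tau>. ((\<lambda>t. psi_flow t x) has_real_derivative
                 ((psi_flow \<tau> x)^2 - psi_flow \<tau> x)) (at \<tau>)) \<and>
        (\<forall>f :: real \<Rightarrow> real. f 0 = x \<and>
           (\<forall>t. (f has_real_derivative ((f t)^2 - f t)) (at t))
           \<longrightarrow> (\<forall>t. f t = psi_flow t x)))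
   \<and> (\<forall>x\<in>{0<..<1}. strict_mono (\<lambda>\<tau>. phi_flow \<tau> x - psi_flow \<tau> x))
   \<and> (\<forall>x\<in>{0<..<1}. \<not> ((\<lambda>\<tau>. sync_omega \<tau> x) \<longlongrightarrow> 0) at_top)"
proof (intro conjI ballI allI impI)
  fix x :: real assume x: "x \<in> {0..1}"
  show "phi_flow 0 x = x" "psi_flow 0 x = x" by (simp_all add: phi_flow_def psi_flow_def)
  fix \<tau>
  show "((\<lambda>t. phi_flow t x) has_real_derivative (phi_flow \<tau> x - (phi_flow \<tau> x)^2)) (at \<tau>)"
    by (rule phi_deriv[OF x])
  show "((\<lambda>t. psi_flow t x) has_real_derivative ((psi_flow \<tau> x)^2 - psi_flow \<tau> x)) (at \<tau>)"
    by (rule psi_deriv[OF x])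
next
  fix x :: real and f :: "real \<Rightarrow> real" and t
  assume "x \<in> {0..1}" "f 0 = x \<and> (\<forall>t. (f has_real_derivative (f t - (f t)^2)) (at t))"
  then show "f t = phi_flow t x" using uniq by blast
next
  fix x :: real and f :: "real \<Rightarrow> real" and t
  assume "x \<in> {0..1}" "f 0 = x \<and> (\<forall>t. (f has_real_derivative ((f t)^2 - f t)) (at t))"
  then show "f t = psi_flow t x" using psi_uniq by blast
next
  fix x :: real assume "x \<in> {0<..<1}"
  then show "strict_mono (\<lambda>\<tau>. phi_flow \<tau> x - psi_flow \<tau> x)" by (rule diff_mono)
next
  fix x :: real assume "x \<in> {0<..<1}"
  then show "\<not> ((\<lambda>\<tau>. sync_omega \<tau> x) \<longlongrightarrow> 0) at_top" by (rule no_sync)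
qed

end
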